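(* Let $X$ be a nonempty discrete (finite or countable) set and $p^*$ a probability distribution on $X$ (the ground truth). Let $X^{\checkmark}=\{x\in X: p^*(x)>0\}$ (valid points) and $X^{\times}=\{x\in X:p^*(x)=0\}$ (invalid points). Let $x_1,\dots,x_N\in X^{\checkmark}$ ($N\ge1$) and $q(x)=\frac1N\#\{i:x_i=x\}$. Let $\hat p^*$ be any probability distribution on $X$ maximizing $\mathbb{E}_{q(x)}[p(x)]=\frac1N\sum_{i=1}^N p(x_i)$ over all probability distributions $p$ on $X$. Then $\hat p^*$ is sound: for all $x\in X$, $\hat p^*(x)>0$ implies $x\in X^{\checkmark}$ (equivalently, $x\in X^{\times}$ implies $\hat p^*(x)=0$).
   Context: A probability distribution on $X$ is $p:X\to[0,\infty)$ with $\sum_x p(x)=1$. A distribution $p$ "proves" $x$ when $p(x)>0$; $p$ is sound if every point it proves is valid. *)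

theory Defs
  imports "HOL-Probability.Probability"
begin

definition emp_exp :: "'a list \<Rightarrow> 'a pmf \<Rightarrow> real" where
  "emp_exp xs p = (1 / real (length xs)) * sum_list (map (pmf p) xs)"

definition sound :: "'a pmf \<Rightarrow> 'a pmf \<Rightarrow> bool" where
  "sound pstar p \<longleftrightarrow> (\<forall>x. pmf p x > 0 \<longrightarrow> pmf pstar x > 0)"

end

theory Submission
  imports Defs
begin

theorem mainTheorem4:
  fixes pstar phat :: "'a::countable pmf" and xs :: "'a list"
  assumes "length xs \<ge> 1"
    and "\<forall>x\<in>set xs. pmf pstar x > 0"
    and "\<forall>p :: 'a pmf. emp_exp xs p \<le> emp_exp xs phat"
  shows "sound pstar phat"
  unfolding sound_def
proof (intro allI impI, rule ccontr)
  fix z assume pz: "pmf phat z > 0" and nz: "\<not> pmf pstar z > 0"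
  obtain x1 ys where xs: "xs = x1 # ys" using assms(1) by (cases xs) auto
  have zn: "z \<notin> set xs" using assms(2) nz by auto
  hence z1: "z \<noteq> x1" using xs by auto
  define f where "f = (\<lambda>y. if y = z then x1 else y)"
  define p where "p = map_pmf f phat"
  have pm: "pmf p x = measure_pmf.prob phat (f -` {x})" for x
    unfolding p_def by (simp add: pmf_map)
  have "f -` {x1} = {x1, z}" unfolding f_def using z1 by (auto split: if_splits)
  hence p1: "pmf p x1 = pmf phat x1 + pmf phat z"
    using pm[of x1] z1 by (simp add: measure_pmf_single measure_measure_pmf_finite)
  have px: "pmf p x = pmf phat x" if "x \<noteq> x1" "x \<noteq> z" for x
  proof -
    have "f -` {x} = {x}" unfolding f_def using that by auto
    thus ?thesis using pm[of x] by (simp add: measure_pmf_single)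
  qed
  have ge: "pmf phat x \<le> pmf p x" if "x \<in> set xs" for x
  proof (cases "x = x1")
    case True thus ?thesis using p1 by (simp add: pmf_nonneg)
  next
    case False have "x \<noteq> z" using that zn by auto thus ?thesis using px[of x] False by simp
  qed
  have "sum_list (map (pmf phat) ys) \<le> sum_list (map (pmf p) ys)"
    by (rule sum_list_mono) (use ge xs in auto)
  hence "sum_list (map (pmf phat) xs) < sum_list (map (pmf p) xs)"
    using xs p1 pz by simp
  hence "emp_exp xs phat < emp_exp xs p"
    unfolding emp_exp_def using xs by (simp add: divide_strict_right_mono)
  thus False using assms(3) by (meson not_le)
qed

end
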